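(* Let $G$ be a connected simple graph on $n$ vertices with Laplacian $L$. If $\mu$ is an integer with $\mu\notin[0,n+1]$, then $L$ is not $\mu$-collapsed, i.e. the matrix $L-\mu\,\mathrm{Id}$ is spread.
   Context: A graph is simple if any two distinct vertices are joined by at most one edge (no loops). The Laplacian $L=(\ell_{ij})\in M_n(\mathbb{Z})$ has $\ell_{ii}$ equal to the degree of $v_i$ and $\ell_{ij}=-1$ if $v_i,v_j$ are adjacent, $0$ otherwise ($i\neq j$). For $M\in M_n(\mathbb{Z})$, let $\mathrm{Im}(M)$ be the $\mathbb{Z}$-span of its columns; $M$ is spread if the quotient map $\mathbb{Z}^n\to\mathbb{Z}^n/\mathrm{Im}(M)$ is injective on the standard basis $\{e_1,\dots,e_n\}$ (equivalently, $e_i-e_j\notin\mathrm{Im}(M)$ for all $i\neq j$). For an integer $\mu$, $M$ is $\mu$-collapsed if $M-\mu\,\mathrm{Id}$ is not spread. *)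

theory Defs
  imports "HOL-Analysis.Analysis"
begin

definition simple_graph :: "('a \<Rightarrow> 'a \<Rightarrow> bool) \<Rightarrow> bool" where
  "simple_graph E \<longleftrightarrow> (\<forall>u v. E u v \<longrightarrow> E v u) \<and> (\<forall>v. \<not> E v v)"

definition connected_graph :: "('a \<Rightarrow> 'a \<Rightarrow> bool) \<Rightarrow> bool" where
  "connected_graph E \<longleftrightarrow> (\<forall>u v. E\<^sup>*\<^sup>* u v)"

definition laplacian :: "('a::finite \<Rightarrow> 'a \<Rightarrow> bool) \<Rightarrow> int^'a^'a" where
  "laplacian E = (\<chi> i j. if i = j then int (card {k. E i k}) else if E i j then -1 else 0)"

definition int_image :: "int^'n^'n \<Rightarrow> (int^'n) set" where
  "int_image M = {M *v x | x. True}"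

definition std_basis :: "'n::finite \<Rightarrow> int^'n" where
  "std_basis i = (\<chi> j. if j = i then 1 else 0)"

definition spread :: "int^'n::finite^'n \<Rightarrow> bool" where
  "spread M \<longleftrightarrow> (\<forall>i j. i \<noteq> j \<longrightarrow> std_basis i - std_basis j \<notin> int_image M)"

definition collapsed :: "int^'n::finite^'n \<Rightarrow> int \<Rightarrow> bool" where
  "collapsed M \<mu> \<longleftrightarrow> \<not> spread (M - mat \<mu>)"

end

theory Submission imports Defs begin
lemma Lx:
  assumes "simple_graph E"
  shows "(laplacian E *v x)$u = (\<Sum>v\<in>UNIV. if E u v then x$u - x$v else 0)"
proof -
  have irr: "\<not> E u u" using assms unfolding simple_graph_def by blast
  have "(laplacian E *v x)$u = (\<Sum>v\<in>UNIV. (if u = v then int (card {k. E u k}) * x$u else 0) + (if E u v then - x$v else 0))"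
    unfolding laplacian_def matrix_vector_mult_def using irr
    by (auto intro!: sum.cong)
  also have "\<dots> = int (card {k. E u k}) * x$u - (\<Sum>v\<in>UNIV. if E u v then x$v else 0)"
    unfolding sum.distrib by (simp add: sum_negf[symmetric] if_distrib[of uminus] cong: if_cong)
  also have "(\<Sum>v\<in>UNIV. if E u v then x$u - x$v else 0) = (\<Sum>v\<in>UNIV. if E u v then x$u else 0) - (\<Sum>v\<in>UNIV. if E u v then x$v else 0)"
    by (simp add: sum_subtractf[symmetric] if_distrib cong: if_cong)
  moreover have "(\<Sum>v\<in>UNIV. if E u v then x$u else 0) = int (card {k. E u k}) * x$u"
    by (simp add: sum.If_cases)
  ultimately show ?thesis by simp
qed
lemma Q2:
  assumes "simple_graph E"
  shows "2 * (\<Sum>u\<in>UNIV. x$u * (laplacian E *v x)$u) = (\<Sum>u\<in>UNIV. \<Sum>v\<in>UNIV. if E u v then (x$u - x$v)^2 else 0)"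
proof -
  have sym: "\<And>u v. E u v = E v u" using assms unfolding simple_graph_def by blast
  define g where "g u v = (if E u v then x$u * (x$u - x$v) else 0)" for u v
  have Q: "(\<Sum>u\<in>UNIV. x$u * (laplacian E *v x)$u) = (\<Sum>u\<in>UNIV. \<Sum>v\<in>UNIV. g u v)"
    unfolding Lx[OF assms] g_def by (simp add: sum_distrib_left if_distrib cong: if_cong)
  have "(\<Sum>u\<in>UNIV. \<Sum>v\<in>UNIV. g u v) = (\<Sum>u\<in>UNIV. \<Sum>v\<in>UNIV. g v u)"
    by (rule sum.swap)
  hence "2 * (\<Sum>u\<in>UNIV. \<Sum>v\<in>UNIV. g u v) = (\<Sum>u\<in>UNIV. \<Sum>v\<in>UNIV. g u v + g v u)"
    by (simp add: sum.distrib)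
  also have "\<dots> = (\<Sum>u\<in>UNIV. \<Sum>v\<in>UNIV. if E u v then (x$u - x$v)^2 else 0)"
    unfolding g_def by (intro sum.cong refl) (auto simp: sym[of _ u for u] power2_eq_square algebra_simps)
  finally show ?thesis using Q by simp
qed

lemma allpairs:
  fixes f :: "'a::finite \<Rightarrow> int"
  shows "(\<Sum>u\<in>UNIV. \<Sum>v\<in>UNIV. (f u - f v)^2) = 2 * int CARD('a) * (\<Sum>u\<in>UNIV. (f u)^2) - 2 * (\<Sum>u\<in>UNIV. f u)^2"
proof -
  have "(\<Sum>u\<in>UNIV. \<Sum>v\<in>UNIV. (f u - f v)^2) = (\<Sum>u\<in>UNIV. \<Sum>v\<in>UNIV. (f u)^2 + (f v)^2 - 2 * f u * f v)"
    by (intro sum.cong refl) (simp add: power2_eq_square algebra_simps)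
  also have "\<dots> = 2 * int CARD('a) * (\<Sum>u\<in>UNIV. (f u)^2) - 2 * (\<Sum>u\<in>UNIV. f u)^2"
    apply (simp add: sum.distrib sum_subtractf sum_distrib_left[symmetric] sum_distrib_right[symmetric] power2_eq_square algebra_simps)
    by (simp add: sum_distrib_left mult_ac)
  finally show ?thesis .
qed

lemma sq_ge: "(a::int) \<le> a^2"
proof (cases "a \<le> 0")
  case True then show ?thesis by (smt (verit) zero_le_power2)
next
  case False then have "a * 1 \<le> a * a" by (intro mult_left_mono) auto
  then show ?thesis by (simp add: power2_eq_square)
qed

theorem theorem3p1:
  fixes E :: "'a::finite \<Rightarrow> 'a \<Rightarrow> bool" and \<mu> :: int
  assumes "simple_graph E" and "connected_graph E"
    and "\<mu> \<notin> {0 .. int CARD('a) + 1}"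
  shows "\<not> collapsed (laplacian E) \<mu>"
proof -
  let ?L = "laplacian E"
  have sym: "\<And>u v. E u v = E v u" using assms(1) unfolding simple_graph_def by blast
  { fix i j :: 'a and y :: "int^'a"
    assume ij: "i \<noteq> j" and b: "std_basis i - std_basis j = (?L - mat \<mu>) *v y"
    define bb where "bb = std_basis i - std_basis j"
    have bbu: "bb$u = (if u = i then 1 else 0) - (if u = j then 1 else 0)" for u
      unfolding bb_def std_basis_def by simp
    have comp: "(?L *v y)$u = bb$u + \<mu> * y$u" for u
    proof -
      have "bb$u = (\<Sum>v\<in>UNIV. (?L$u$v - (if u = v then \<mu> else 0)) * y$v)"
        using b unfolding bb_def by (simp add: matrix_vector_mult_def mat_def)
      also have "\<dots> = (?L *v y)$u - (\<Sum>v\<in>UNIV. (if u = v then \<mu> else 0) * y$v)"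
        by (simp only: left_diff_distrib sum_subtractf) (simp add: matrix_vector_mult_def)
      also have "(\<Sum>v\<in>UNIV. (if u = v then \<mu> else 0) * y$v) = (\<Sum>v\<in>UNIV. (if u = v then \<mu> * y$v else 0))"
        by (intro sum.cong) auto
      also have "(\<Sum>v\<in>UNIV. (if u = v then \<mu> * y$v else 0)) = \<mu> * y$u" by simp
      finally show ?thesis by simp
    qed
    define Q where "Q = (\<Sum>u\<in>UNIV. y$u * (?L *v y)$u)"
    define S2 where "S2 = (\<Sum>u\<in>UNIV. (y$u)^2)"
    have sb: "(\<Sum>u\<in>UNIV. y$u * bb$u) = y$i - y$j"
    proof -
      have "(\<Sum>u\<in>UNIV. y$u * bb$u) = (\<Sum>u\<in>UNIV. (if u = i then y$u else 0) - (if u = j then y$u else 0))"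
        by (intro sum.cong) (auto simp: bbu)
      also have "\<dots> = y$i - y$j" by (simp only: sum_subtractf) simp
      finally show ?thesis .
    qed
    have QE: "Q = y$i - y$j + \<mu> * S2"
      unfolding Q_def S2_def comp using sb
      by (simp add: distrib_left sum.distrib sum_distrib_left power2_eq_square mult_ac)
    have Q2': "2 * Q = (\<Sum>u\<in>UNIV. \<Sum>v\<in>UNIV. if E u v then (y$u - y$v)^2 else 0)"
      unfolding Q_def by (rule Q2[OF assms(1)])
    have Qnn: "0 \<le> Q" using Q2' by (smt (verit) sum_nonneg zero_le_power2)
    have "2 * Q \<le> (\<Sum>u\<in>UNIV. \<Sum>v\<in>UNIV. (y$u - y$v)^2)"
      unfolding Q2' by (intro sum_mono) auto
    also have "\<dots> \<le> 2 * int CARD('a) * S2"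
      unfolding allpairs S2_def by simp
    finally have Qup: "Q \<le> int CARD('a) * S2" by simp
    have S2ij: "(y$i)^2 + (y$j)^2 \<le> S2"
    proof -
      have "(\<Sum>u\<in>{i,j}. (y$u)^2) \<le> S2" unfolding S2_def
        by (intro sum_mono2) auto
      thus ?thesis using ij by simp
    qed
    have l1: "y$i - y$j \<le> S2" using sq_ge[of "y$i"] sq_ge[of "- y$j"] S2ij by simp
    have l2: "y$j - y$i \<le> S2" using sq_ge[of "y$j"] sq_ge[of "- y$i"] S2ij by simp
    have S2nn: "0 \<le> S2" unfolding S2_def by (simp add: sum_nonneg)
    have const: "y$u = y$v" for u v
    proof (cases "\<mu> = -1")
      case True
      with QE l1 Qnn have "Q = 0" by simp
      with Q2' have z: "(\<Sum>u\<in>UNIV. \<Sum>v\<in>UNIV. if E u v then (y$u - y$v)^2 else 0) = 0" by simp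
      have adj: "E a c \<Longrightarrow> y$a = y$c" for a c
      proof -
        assume "E a c"
        have "(\<Sum>v\<in>UNIV. if E a v then (y$a - y$v)^2 else 0) = 0"
          using z by (subst (asm) sum_nonneg_eq_0_iff) (auto intro!: sum_nonneg)
        hence "(if E a c then (y$a - y$c)^2 else 0) = (0::int)"
          by (subst (asm) sum_nonneg_eq_0_iff) auto
        with \<open>E a c\<close> show ?thesis by simp
      qed
      have "E\<^sup>*\<^sup>* u v" using assms(2) unfolding connected_graph_def by blast
      then show ?thesis by (induction rule: rtranclp.induct) (auto dest: adj)
    next
      case False
      with assms(3) have "\<mu> \<le> -2 \<or> \<mu> \<ge> int CARD('a) + 2" by auto
      then have "S2 \<le> 0"
      proof
        assume "\<mu> \<le> -2"
        hence "\<mu> * S2 \<le> -2 * S2" using S2nn by (intro mult_right_mono) auto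
        thus ?thesis using QE Qnn l1 by linarith
      next
        assume "\<mu> \<ge> int CARD('a) + 2"
        hence "(int CARD('a) + 2) * S2 \<le> \<mu> * S2" using S2nn by (intro mult_right_mono) auto
        thus ?thesis using QE Qup l2 by (simp add: algebra_simps)
      qed
      hence "S2 = 0" using S2nn by simp
      hence "\<forall>w\<in>UNIV. (y$w)^2 = 0" unfolding S2_def
        by (subst (asm) sum_nonneg_eq_0_iff) auto
      thus ?thesis by simp
    qed
    have "(?L *v y)$u = 0" for u
    proof -
      have "(if E u v then y$u - y$v else 0) = 0" for v using const[of u v] by simp
      thus ?thesis unfolding Lx[OF assms(1)] by simp
    qed
    hence "bb$i = - \<mu> * y$i" "bb$j = - \<mu> * y$j" using comp[of i] comp[of j] by simp_all
    hence "bb$i = bb$j" using const[of i j] by simp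
    hence False using ij by (simp add: bbu)
  }
  thus ?thesis unfolding collapsed_def spread_def int_image_def by blast
qed

end
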